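(* For every infinite dimensional real Banach space $X$ there is a locally convex Hausdorff topology $\tau$ on $X$, weaker than the norm topology, and a $\tau$-compact convex set $K\subset X$ which is not remotal from $0$ (i.e. there is no $k\in K$ with $\|k\|=\sup\{\|k'\|:k'\in K\}$).
   Context: A set $C$ in a Banach space is remotal from $z$ if there exists $c_0\in C$ with $\|z-c_0\|=\sup\{\|z-c\|:c\in C\}$. *)

theory Defs
  imports "HOL-Analysis.Analysis"
begin

definition remotal :: "'a::real_normed_vector set \<Rightarrow> 'a \<Rightarrow> bool" where
  "remotal C z \<longleftrightarrow> (\<exists>c0\<in>C. norm (z - c0) = (SUP c\<in>C. norm (z - c)))"

definition locally_convex_topology :: "'a::real_vector topology \<Rightarrow> bool" where
  "locally_convex_topology \<tau> \<longleftrightarrow>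
     topspace \<tau> = UNIV \<and>
     continuous_map (prod_topology \<tau> \<tau>) \<tau> (\<lambda>(x, y). x + y) \<and>
     continuous_map (prod_topology (euclidean :: real topology) \<tau>) \<tau> (\<lambda>(c, x). c *\<^sub>R x) \<and>
     (\<forall>x U. openin \<tau> U \<and> x \<in> U \<longrightarrow> (\<exists>V. openin \<tau> V \<and> convex V \<and> x \<in> V \<and> V \<subseteq> U))"

end

theory Submission
  imports Defs
begin

definition good :: "'a::real_normed_vector \<Rightarrow> ('a \<times> real) set \<Rightarrow> bool" where
"good x G \<longleftrightarrow> (x, norm x) \<in> G \<and> (\<forall>a b c d. (a,b)\<in>G \<longrightarrow> (c,d)\<in>G \<longrightarrow> (a+c,b+d)\<in>G)
   \<and> (\<forall>a b r. (a,b)\<in>G \<longrightarrow> (r *\<^sub>R a, r*b)\<in>G) \<and> (\<forall>a b. (a,b)\<in>G \<longrightarrow> b \<le> norm a)"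

lemma good_fun:
  assumes "good x G" "(a,b)\<in>G" "(a,c)\<in>G" shows "b = c"
proof -
  have m: "\<And>a b. (a,b)\<in>G \<Longrightarrow> (-a, -b) \<in> G"
    using assms(1) unfolding good_def by (metis mult_minus1 scaleR_minus1_left)
  have "(a + -a, b + -c) \<in> G" "(a + -a, c + -b) \<in> G"
    using assms m unfolding good_def by blast+
  hence "b + -c \<le> 0" "c + -b \<le> 0" using assms(1) unfolding good_def by fastforce+
  thus ?thesis by simp
qed

lemma good_addD: "good x G \<Longrightarrow> (a,b)\<in>G \<Longrightarrow> (c,d)\<in>G \<Longrightarrow> (a+c,b+d)\<in>G"
  unfolding good_def by blast
lemma good_scD: "good x G \<Longrightarrow> (a,b)\<in>G \<Longrightarrow> (r *\<^sub>R a, r*b)\<in>G"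
  unfolding good_def by blast
lemma good_leD: "good x G \<Longrightarrow> (a,b)\<in>G \<Longrightarrow> b \<le> norm a"
  unfolding good_def by blast
lemma good_xD: "good x G \<Longrightarrow> (x, norm x)\<in>G"
  unfolding good_def by blast

lemma good_zero: "good x G \<Longrightarrow> (0,0) \<in> G"
  unfolding good_def by (metis mult_zero_left scaleR_zero_left)

lemma good_extend:
  assumes g: "good x M" and z: "z \<notin> fst ` M"
  shows "\<exists>M'. good x M' \<and> M \<subseteq> M' \<and> M' \<noteq> M"
proof -
  have add: "\<And>a b c d. (a,b)\<in>M \<Longrightarrow> (c,d)\<in>M \<Longrightarrow> (a+c,b+d)\<in>M"
   and sc: "\<And>a b r. (a,b)\<in>M \<Longrightarrow> (r *\<^sub>R a, r*b)\<in>M"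
   and dom: "\<And>a b. (a,b)\<in>M \<Longrightarrow> b \<le> norm a" and xm: "(x, norm x) \<in> M"
    using g unfolding good_def by blast+
  have key: "b1 - norm (a1 - z) \<le> norm (a2 + z) - b2" if "(a1,b1)\<in>M" "(a2,b2)\<in>M" for a1 b1 a2 b2
  proof -
    have "b1 + b2 \<le> norm (a1 + a2)" using dom add that by blast
    also have "\<dots> \<le> norm (a1 - z) + norm (a2 + z)"
      using norm_triangle_ineq[of "a1 - z" "a2 + z"] by simp
    finally show ?thesis by simp
  qed
  define L where "L = {b - norm (a - z) | a b. (a,b) \<in> M}"
  define c where "c = Sup L"
  have Lne: "L \<noteq> {}" using good_zero[OF g] unfolding L_def by blast
  have Lbdd: "bdd_above L" unfolding L_def bdd_above_def
    using key good_zero[OF g] by fastforce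
  have c1: "b - norm (a - z) \<le> c" if "(a,b)\<in>M" for a b
    unfolding c_def using Lbdd that unfolding L_def by (intro cSup_upper) auto
  have c2: "c \<le> norm (a + z) - b" if "(a,b)\<in>M" for a b
    unfolding c_def using Lne that key unfolding L_def by (intro cSup_least) auto
  define M' where "M' = {(a + t *\<^sub>R z, b + t * c) | a b t. (a,b) \<in> M}"
  have "good x M'"
    unfolding good_def
  proof (intro conjI allI impI)
    have "(x + 0 *\<^sub>R z, norm x + 0 * c) \<in> M'" unfolding M'_def using xm by blast
    thus "(x, norm x) \<in> M'" by simp
  next
    fix a b c' d assume "(a,b) \<in> M'" "(c',d) \<in> M'"
    then obtain a1 b1 t1 a2 b2 t2 where "(a1,b1)\<in>M" "(a2,b2)\<in>M" "a = a1 + t1 *\<^sub>R z" "b = b1 + t1*c"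
       "c' = a2 + t2 *\<^sub>R z" "d = b2 + t2 * c" unfolding M'_def by blast
    moreover have "(a1+a2 + (t1+t2) *\<^sub>R z, (b1+b2) + (t1+t2)*c) \<in> M'"
      unfolding M'_def using add calculation(1,2) by blast
    ultimately show "(a + c', b + d) \<in> M'" by (simp add: algebra_simps)
  next
    fix a b r assume "(a,b) \<in> M'"
    then obtain a1 b1 t1 where "(a1,b1)\<in>M" "a = a1 + t1 *\<^sub>R z" "b = b1 + t1*c"
      unfolding M'_def by blast
    moreover have "(r *\<^sub>R a1 + (r*t1) *\<^sub>R z, r*b1 + (r*t1)*c) \<in> M'"
      unfolding M'_def using sc calculation(1) by blast
    ultimately show "(r *\<^sub>R a, r * b) \<in> M'" by (simp add: algebra_simps)
  next
    fix a b assume "(a,b) \<in> M'"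
    then obtain a1 b1 t where ab: "(a1,b1)\<in>M" "a = a1 + t *\<^sub>R z" "b = b1 + t*c"
      unfolding M'_def by blast
    show "b \<le> norm a"
    proof (cases t "0::real" rule: linorder_cases)
      case equal thus ?thesis using ab dom by simp
    next
      case greater
      have "(inverse t *\<^sub>R a1, inverse t * b1) \<in> M" using sc ab by blast
      from c2[OF this] have "inverse t * b1 + c \<le> norm (inverse t *\<^sub>R a1 + z)" by simp
      hence "t * (inverse t * b1 + c) \<le> t * norm (inverse t *\<^sub>R a1 + z)"
        using greater by (simp add: mult_left_mono)
      also have "t * norm (inverse t *\<^sub>R a1 + z) = norm (t *\<^sub>R (inverse t *\<^sub>R a1 + z))"
        using greater by simp
      also have "t *\<^sub>R (inverse t *\<^sub>R a1 + z) = a" using greater ab by (simp add: scaleR_add_right)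
      finally show ?thesis using ab greater by (simp add: algebra_simps)
    next
      case less
      define s where "s = - t"
      have s: "s > 0" using less s_def by simp
      have "(inverse s *\<^sub>R a1, inverse s * b1) \<in> M" using sc ab by blast
      from c1[OF this] have "inverse s * b1 - c \<le> norm (inverse s *\<^sub>R a1 - z)" by simp
      hence "s * (inverse s * b1 - c) \<le> s * norm (inverse s *\<^sub>R a1 - z)"
        using s by (simp add: mult_left_mono)
      also have "s * norm (inverse s *\<^sub>R a1 - z) = norm (s *\<^sub>R (inverse s *\<^sub>R a1 - z))"
        using s by simp
      also have "s *\<^sub>R (inverse s *\<^sub>R a1 - z) = a" using s ab s_def by (simp add: scaleR_diff_right)
      finally show ?thesis using ab s s_def by (simp add: algebra_simps)
    qed
  qed
  moreover have "M \<subseteq> M'"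
  proof
    fix p assume "p \<in> M"
    then obtain a b where "p = (a,b)" "(a,b) \<in> M" by (cases p) auto
    moreover have "(a + 0 *\<^sub>R z, b + 0 * c) \<in> M'" unfolding M'_def using calculation(2) by blast
    ultimately show "p \<in> M'" by simp
  qed
  moreover have "(0 + 1 *\<^sub>R z, 0 + 1 * c) \<in> M'" unfolding M'_def using good_zero[OF g]
    by blast
  hence "(z, c) \<in> M'" by simp
  hence "M' \<noteq> M" using z by force
  ultimately show ?thesis by blast
qed

lemma HB_norming:
  fixes x :: "'a::real_normed_vector"
  shows "\<exists>f. bounded_linear f \<and> (\<forall>y. \<bar>f y\<bar> \<le> norm y) \<and> f x = norm x"
proof -
  define A where "A = {G. good x G}"
  define G0 where "G0 = {(t *\<^sub>R x, t * norm x) | t. True}"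
  have G0: "good x G0" unfolding good_def
  proof (intro conjI allI impI)
    have "(1 *\<^sub>R x, 1 * norm x) \<in> G0" unfolding G0_def by blast
    thus "(x, norm x) \<in> G0" by simp
  next
    fix a b c d assume "(a,b) \<in> G0" "(c,d) \<in> G0"
    then obtain s t where "a = s *\<^sub>R x" "b = s * norm x" "c = t *\<^sub>R x" "d = t * norm x"
      unfolding G0_def by blast
    moreover have "((s+t) *\<^sub>R x, (s+t) * norm x) \<in> G0" unfolding G0_def by blast
    ultimately show "(a+c, b+d) \<in> G0" by (simp add: scaleR_add_left distrib_right)
  next
    fix a b r assume "(a,b) \<in> G0"
    then obtain s where "a = s *\<^sub>R x" "b = s * norm x" unfolding G0_def by blast
    moreover have "((r * s) *\<^sub>R x, (r * s) * norm x) \<in> G0" unfolding G0_def by blast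
    ultimately show "(r *\<^sub>R a, r*b) \<in> G0" by (simp add: mult.assoc)
  next
    fix a b assume "(a,b) \<in> G0"
    then obtain s where "a = s *\<^sub>R x" "b = s * norm x" unfolding G0_def by blast
    thus "b \<le> norm a" by (simp add: mult_right_mono)
  qed
  have "\<exists>M\<in>A. \<forall>X\<in>A. M \<subseteq> X \<longrightarrow> X = M"
  proof (rule Zorn_Lemma2, intro ballI)
    fix C assume C: "C \<in> chains A"
    show "\<exists>U\<in>A. \<forall>X\<in>C. X \<subseteq> U"
    proof (cases "C = {}")
      case True thus ?thesis using G0 A_def by blast
    next
      case False
      have CA: "C \<subseteq> A" and ch: "\<And>X Y. X\<in>C \<Longrightarrow> Y\<in>C \<Longrightarrow> X \<subseteq> Y \<or> Y \<subseteq> X"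
        using C unfolding chains_def chain_subset_def by auto
      have "good x (\<Union>C)" unfolding good_def
      proof (intro conjI allI impI)
        obtain Z where "Z \<in> C" using False by blast
        thus "(x, norm x) \<in> \<Union>C" using CA A_def good_xD by blast
      next
        fix a b c d assume "(a,b) \<in> \<Union>C" "(c,d) \<in> \<Union>C"
        then obtain X Y where "X\<in>C" "Y\<in>C" "(a,b)\<in>X" "(c,d)\<in>Y" by blast
        then obtain Z where "Z\<in>C" "(a,b)\<in>Z" "(c,d)\<in>Z" using ch by blast
        moreover have "good x Z" using CA A_def calculation(1) by blast
        ultimately show "(a+c,b+d) \<in> \<Union>C" using good_addD by blast
      next
        fix a b r assume "(a,b) \<in> \<Union>C"
        then obtain Z where "Z \<in> C" "(a,b) \<in> Z" by blast
        moreover have "good x Z" using CA A_def calculation(1) by blast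
        ultimately show "(r *\<^sub>R a, r*b) \<in> \<Union>C" using good_scD by blast
      next
        fix a b assume "(a,b) \<in> \<Union>C"
        then obtain Z where "Z \<in> C" "(a,b) \<in> Z" by blast
        moreover have "good x Z" using CA A_def calculation(1) by blast
        ultimately show "b \<le> norm a" using good_leD by blast
      qed
      thus ?thesis using A_def by blast
    qed
  qed
  then obtain M where M: "good x M" and max: "\<And>X. good x X \<Longrightarrow> M \<subseteq> X \<Longrightarrow> X = M"
    unfolding A_def by blast
  have all: "y \<in> fst ` M" for y
  proof (rule ccontr)
    assume "y \<notin> fst ` M"
    from good_extend[OF M this] obtain M' where "good x M'" "M \<subseteq> M'" "M' \<noteq> M" by blast
    with max show False by blast
  qed
  define f where "f y = (SOME b. (y,b) \<in> M)" for y
  have fM: "(y, f y) \<in> M" for y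
  proof -
    obtain p where "p \<in> M" "y = fst p" using all[of y] by blast
    hence "(y, snd p) \<in> M" by simp
    thus ?thesis unfolding f_def by (rule someI)
  qed
  have fv: "(y, b) \<in> M \<Longrightarrow> f y = b" for y b using good_fun[OF M fM] by blast
  have add: "f (a + b) = f a + f b" for a b
    by (rule fv, rule good_addD[OF M fM fM])
  have sc: "f (r *\<^sub>R a) = r * f a" for r a
    by (rule fv, rule good_scD[OF M fM])
  have le: "f y \<le> norm y" for y using good_leD[OF M fM] .
  have ab: "\<bar>f y\<bar> \<le> norm y" for y
    using le[of y] le[of "-y"] sc[of "-1" y] by auto
  have "bounded_linear f"
    by (rule bounded_linear_intro[of _ 1]) (use add sc ab in auto)
  moreover have "f x = norm x" using fv good_xD[OF M] by blast
  ultimately show ?thesis using ab by blast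
qed

lemma infdim_ker:
  fixes G :: "nat \<Rightarrow> 'a::real_vector \<Rightarrow> real"
  assumes inf: "\<forall>B :: 'a set. finite B \<longrightarrow> span B \<noteq> UNIV" and lin: "\<forall>k. linear (G k)"
  shows "finite B \<Longrightarrow> \<not> {y. \<forall>k<n. G k y = 0} \<subseteq> span B"
proof (induction n arbitrary: B)
  case 0 thus ?case using inf by auto
next
  case (Suc n)
  define V where "V = {y. \<forall>k<n. G k y = 0}"
  have eq: "{y. \<forall>k<Suc n. G k y = 0} = V \<inter> {y. G n y = 0}" unfolding V_def using less_Suc_eq by auto
  show ?case
  proof
    assume sub: "{y. \<forall>k<Suc n. G k y = 0} \<subseteq> span B"
    show False
    proof (cases "\<exists>v0\<in>V. G n v0 \<noteq> 0")
      case True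
      then obtain v0 where v0: "v0 \<in> V" "G n v0 \<noteq> 0" by blast
      have "V \<subseteq> span (insert v0 B)"
      proof
        fix v assume v: "v \<in> V"
        define w where "w = v - (G n v / G n v0) *\<^sub>R v0"
        have lk: "linear (G k)" for k using lin by blast
        have "w \<in> V" using v v0 unfolding w_def V_def
          by (auto simp: linear_diff[OF lk] linear_cmul[OF lk])
        moreover have "G n w = 0" using v0 unfolding w_def
          by (simp add: linear_diff[OF lk] linear_cmul[OF lk])
        ultimately have "w \<in> span B" using sub eq by blast
        hence "w \<in> span (insert v0 B)" by (meson span_mono subset_insertI subsetD)
        moreover have "v0 \<in> span (insert v0 B)" by (simp add: span_base)
        ultimately have "w + (G n v / G n v0) *\<^sub>R v0 \<in> span (insert v0 B)"
          by (intro span_add span_scale)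
        thus "v \<in> span (insert v0 B)" unfolding w_def by simp
      qed
      thus False using Suc.IH[of "insert v0 B"] Suc.prems V_def by auto
    next
      case False
      hence "V \<subseteq> span B" using sub eq by auto
      thus False using Suc.IH[OF Suc.prems] V_def by auto
    qed
  qed
qed

lemma ker_nonzero:
  fixes G :: "nat \<Rightarrow> 'a::real_vector \<Rightarrow> real"
  assumes inf: "\<forall>B :: 'a set. finite B \<longrightarrow> span B \<noteq> UNIV" and lin: "\<forall>k<n. linear (G k)"
  shows "\<exists>y. y \<noteq> 0 \<and> (\<forall>k<n. G k y = 0)"
proof -
  define G' where "G' k = (if k < n then G k else (\<lambda>_. 0))" for k
  have "\<forall>k. linear (G' k)" using lin unfolding G'_def by (auto intro: linear_zero)
  from infdim_ker[OF inf this, of "{}" n] have "\<not> {y. \<forall>k<n. G' k y = 0} \<subseteq> {0}" by simp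
  thus ?thesis unfolding G'_def by auto
qed

definition rr :: "nat \<Rightarrow> real" where "rr n = 1 - 1 / (real n + 2)"

definition Dv :: "(nat \<Rightarrow> 'a::real_vector) \<Rightarrow> nat \<Rightarrow> 'a" where
  "Dv X j = (let l = (from_nat (fst (prod_decode j)) :: rat list) in
     \<Sum>i<min (length l) (Suc j). of_rat (l!i) *\<^sub>R X i)"

primrec FF :: "nat \<Rightarrow> (nat \<Rightarrow> 'a::real_normed_vector) \<times> (nat \<Rightarrow> 'a \<Rightarrow> real)" where
  "FF 0 = (\<lambda>_. 0, \<lambda>_ _. 0)"
| "FF (Suc n) = (let X = fst (FF n); G = snd (FF n);
     xn = (SOME y. norm y = rr n \<and> (\<forall>k<n. G k y = 0));
     X' = X(n := xn);
     gn = (SOME g. bounded_linear g \<and> (\<forall>y. \<bar>g y\<bar> \<le> norm y) \<and> g (Dv X' n) = norm (Dv X' n))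
   in (X', G(n := gn)))"

definition xs :: "nat \<Rightarrow> 'a::real_normed_vector" where "xs n = fst (FF (Suc n)) n"
definition gs :: "nat \<Rightarrow> 'a::real_normed_vector \<Rightarrow> real" where "gs n = snd (FF (Suc n)) n"

lemma FF_stab: "n < m \<Longrightarrow> fst (FF m) n = xs n \<and> snd (FF m) n = gs n"
proof (induction m)
  case 0 thus ?case by simp
next
  case (Suc m)
  show ?case
  proof (cases "n = m")
    case True thus ?thesis unfolding xs_def gs_def by simp
  next
    case False
    hence "n < m" using Suc.prems by simp
    thus ?thesis using Suc.IH False by (simp add: Let_def)
  qed
qed

lemma Dv_cong: "(\<And>i. i \<le> j \<Longrightarrow> X i = Y i) \<Longrightarrow> Dv X j = Dv Y j"
  unfolding Dv_def Let_def by (intro sum.cong refl) auto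

lemma gs_spec:
  "bounded_linear (gs n :: 'a::real_normed_vector \<Rightarrow> real) \<and> (\<forall>y::'a. \<bar>gs n y\<bar> \<le> norm y)
    \<and> gs n (Dv (xs :: nat \<Rightarrow> 'a) n) = norm (Dv (xs :: nat \<Rightarrow> 'a) n)"
proof -
  define X' where "X' = (fst (FF (Suc n)) :: nat \<Rightarrow> 'a)"
  have "X' i = xs i" if "i \<le> n" for i
    using FF_stab[of i "Suc n"] that unfolding X'_def by (metis le_imp_less_Suc)
  hence "Dv X' n = Dv xs n" by (rule Dv_cong)
  moreover have "bounded_linear (gs n :: 'a \<Rightarrow> real) \<and> (\<forall>y::'a. \<bar>gs n y\<bar> \<le> norm y) \<and> gs n (Dv X' n) = norm (Dv X' n)"
  proof -
    have e: "\<exists>g. bounded_linear g \<and> (\<forall>y. \<bar>g y\<bar> \<le> norm y) \<and> g (Dv X' n) = norm (Dv X' n)"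
      by (rule HB_norming)
    have gd: "gs n = (SOME g. bounded_linear g \<and> (\<forall>y. \<bar>g y\<bar> \<le> norm y) \<and> g (Dv X' n) = norm (Dv X' n))"
      unfolding gs_def X'_def by (simp add: Let_def)
    show ?thesis unfolding gd by (rule someI_ex[OF e])
  qed
  ultimately show ?thesis by simp
qed

lemma xs_spec:
  assumes inf: "\<forall>B :: 'a set. finite B \<longrightarrow> span B \<noteq> UNIV"
  shows "norm (xs n :: 'a::real_normed_vector) = rr n \<and> (\<forall>k<n. gs k (xs n :: 'a) = 0)"
proof -
  define G where "G = (snd (FF n) :: nat \<Rightarrow> 'a \<Rightarrow> real)"
  have G: "\<forall>k<n. G k = gs k" using FF_stab G_def by blast
  have "\<forall>k<n. linear (G k)" using G gs_spec bounded_linear.linear by metis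
  from ker_nonzero[OF inf this] obtain y where y: "y \<noteq> 0" "\<forall>k<n. G k y = 0" by blast
  have rpos: "rr n > 0" unfolding rr_def by (simp add: field_simps)
  have lk: "linear (G k)" if "k < n" for k using \<open>\<forall>k<n. linear (G k)\<close> that by blast
  have ex: "\<exists>y. norm y = rr n \<and> (\<forall>k<n. G k y = 0)"
    apply (rule exI[of _ "(rr n / norm y) *\<^sub>R y"])
    using y rpos by (auto simp: linear_cmul[OF lk])
  have "xs n = (SOME y. norm y = rr n \<and> (\<forall>k<n. G k y = 0))"
    unfolding xs_def G_def by (simp add: Let_def)
  hence "norm (xs n :: 'a) = rr n \<and> (\<forall>k<n. G k (xs n :: 'a) = 0)"
    using someI_ex[OF ex] by simp
  thus ?thesis using G by simp
qed

lemma pad_sum: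
  fixes X :: "nat \<Rightarrow> 'a::real_vector"
  assumes "N \<le> M"
  shows "(\<Sum>i<M. (if i < N then c i else 0) *\<^sub>R X i) = (\<Sum>i<N. c i *\<^sub>R X i)"
proof -
  have "(\<Sum>i<M. (if i < N then c i else 0) *\<^sub>R X i) = (\<Sum>i<N. (if i < N then c i else 0) *\<^sub>R X i)"
    using assms by (intro sum.mono_neutral_right) auto
  thus ?thesis by simp
qed

lemma span_range_sum:
  fixes X :: "nat \<Rightarrow> 'a::real_vector"
  assumes "v \<in> span (range X)"
  shows "\<exists>N c. v = (\<Sum>i<N. c i *\<^sub>R X i)"
  using assms
proof (induction rule: span_induct_alt)
  case base thus ?case by (intro exI[of _ 0]) simp
next
  case (step c0 x y)
  then obtain m where m: "x = X m" by blast
  from step obtain N c where y: "y = (\<Sum>i<N. c i *\<^sub>R X i)" by blast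
  define N' where "N' = max N (Suc m)"
  define c' where "c' i = (if i < N then c i else 0) + (if i = m then c0 else 0)" for i
  have "(\<Sum>i<N'. c' i *\<^sub>R X i) = (\<Sum>i<N'. (if i < N then c i else 0) *\<^sub>R X i) + (\<Sum>i<N'. (if i = m then c0 else 0) *\<^sub>R X i)"
    unfolding c'_def by (simp add: scaleR_add_left sum.distrib)
  also have "(\<Sum>i<N'. (if i < N then c i else 0) *\<^sub>R X i) = y" unfolding y
    by (rule pad_sum) (simp add: N'_def)
  also have "(\<Sum>i<N'. (if i = m then c0 else 0) *\<^sub>R X i) = c0 *\<^sub>R x"
  proof -
    have "(\<Sum>i<N'. (if i = m then c0 else 0) *\<^sub>R X i) = (\<Sum>i<N'. (if i = m then c0 *\<^sub>R X i else 0))"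
      by (intro sum.cong) auto
    also have "\<dots> = c0 *\<^sub>R X m" by (subst sum.delta) (auto simp: N'_def)
    finally show ?thesis using m by simp
  qed
  finally show ?case by (intro exI[of _ N'] exI[of _ c']) simp
qed

lemma infdist_sub_add:
  fixes T :: "'a::real_normed_vector set"
  assumes "subspace T"
  shows "infdist (a + b) T \<le> infdist a T + infdist b T"
proof -
  have ne: "T \<noteq> {}" using assms subspace_0 by blast
  have "infdist (a + b) T - dist b t \<le> infdist a T" if t: "t \<in> T" for t
  proof -
    have "infdist (a + b) T - dist b t \<le> dist a s" if s: "s \<in> T" for s
    proof -
      have "infdist (a + b) T \<le> dist (a + b) (s + t)" using assms s t by (intro infdist_le subspace_add)
      also have "\<dots> \<le> dist a s + dist b t"
        using norm_triangle_ineq[of "a - s" "b - t"] by (simp add: dist_norm algebra_simps)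
      finally show ?thesis by simp
    qed
    thus ?thesis unfolding infdist_notempty[OF ne] by (intro cINF_greatest ne)
  qed
  hence "infdist (a + b) T - infdist a T \<le> dist b t" if "t \<in> T" for t using that by force
  hence "infdist (a + b) T - infdist a T \<le> infdist b T"
    unfolding infdist_notempty[OF ne] by (intro cINF_greatest ne)
  thus ?thesis by simp
qed

lemma infdist_sub_scale:
  fixes T :: "'a::real_normed_vector set"
  assumes "subspace T"
  shows "infdist (c *\<^sub>R a) T \<le> \<bar>c\<bar> * infdist a T"
proof (cases "c = 0")
  case True thus ?thesis using infdist_zero[OF subspace_0[OF assms]] by simp
next
  case False
  have ne: "T \<noteq> {}" using assms subspace_0 by blast
  have "infdist (c *\<^sub>R a) T / \<bar>c\<bar> \<le> dist a s" if s: "s \<in> T" for s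
  proof -
    have "infdist (c *\<^sub>R a) T \<le> dist (c *\<^sub>R a) (c *\<^sub>R s)" using assms s by (intro infdist_le subspace_scale)
    also have "\<dots> = \<bar>c\<bar> * dist a s" by (simp add: dist_norm flip: scaleR_diff_right)
    finally show ?thesis using False by (simp add: field_simps)
  qed
  hence "infdist (c *\<^sub>R a) T / \<bar>c\<bar> \<le> infdist a T"
    unfolding infdist_notempty[OF ne] by (intro cINF_greatest ne)
  thus ?thesis using False by (simp add: field_simps)
qed

lemma infdist_sub_norm:
  fixes T :: "'a::real_normed_vector set"
  assumes "subspace T"
  shows "infdist a T \<le> norm a"
  using infdist_le[OF subspace_0[OF assms], of a] by (simp add: dist_norm)

definition qq :: "(nat \<Rightarrow> 'a::real_normed_vector \<Rightarrow> real) \<Rightarrow> 'a \<Rightarrow> real" where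
  "qq g w = (\<Sum>k. (1/2)^k * \<bar>g k w\<bar>)"

locale gfam =
  fixes g :: "nat \<Rightarrow> 'a::real_normed_vector \<Rightarrow> real"
  assumes bl: "\<And>k. bounded_linear (g k)" and gb: "\<And>k y. \<bar>g k y\<bar> \<le> norm y"
begin

lemma lin: "linear (g k)" using bl bounded_linear.linear by blast
lemma gadd: "g k (a + b) = g k a + g k b" using linear_add[OF lin] .
lemma gsc: "g k (c *\<^sub>R a) = c * g k a" using linear_scale[OF lin] by simp

lemma geo: "summable (\<lambda>k. (1/2::real)^k * C)"
  by (intro summable_mult2 summable_geometric) simp

lemma qsum: "summable (\<lambda>k. (1/2)^k * \<bar>g k w\<bar>)"
  by (rule summable_comparison_test'[OF geo[of "norm w"]]) (simp add: gb mult_left_mono)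

lemma qnonneg: "qq g w \<ge> 0" unfolding qq_def by (intro suminf_nonneg qsum) simp

lemma qnorm: "qq g w \<le> 2 * norm w"
proof -
  have "qq g w \<le> (\<Sum>k. (1/2::real)^k * norm w)" unfolding qq_def
    by (intro suminf_le qsum geo) (simp add: gb mult_left_mono)
  also have "\<dots> = (\<Sum>k. (1/2::real)^k) * norm w" by (intro suminf_mult2[symmetric] summable_geometric) simp
  also have "\<dots> = 2 * norm w" by (subst suminf_geometric) simp_all
  finally show ?thesis .
qed

lemma qadd: "qq g (a + b) \<le> qq g a + qq g b"
proof -
  have "qq g (a + b) \<le> (\<Sum>k. (1/2)^k * \<bar>g k a\<bar> + (1/2)^k * \<bar>g k b\<bar>)" unfolding qq_def
    by (intro suminf_le qsum summable_add) (simp_all add: gadd abs_triangle_ineq flip: distrib_left)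
  also have "\<dots> = qq g a + qq g b" unfolding qq_def by (intro suminf_add[symmetric] qsum)
  finally show ?thesis .
qed

lemma qsc: "qq g (c *\<^sub>R a) \<le> \<bar>c\<bar> * qq g a"
proof -
  have "qq g (c *\<^sub>R a) = (\<Sum>k. \<bar>c\<bar> * ((1/2)^k * \<bar>g k a\<bar>))" unfolding qq_def
    by (intro suminf_cong) (simp add: gsc abs_mult)
  also have "\<dots> = \<bar>c\<bar> * qq g a" unfolding qq_def by (intro suminf_mult qsum)
  finally show ?thesis by simp
qed

lemma qzero: "qq g w = 0 \<Longrightarrow> g k w = 0"
  using suminf_eq_zero_iff[OF qsum, of w] unfolding qq_def by simp

end

lemma gs_fam:
  shows "gfam (gs :: nat \<Rightarrow> 'a::real_normed_vector \<Rightarrow> real)"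
proof (rule gfam.intro)
  show "bounded_linear (gs k :: 'a \<Rightarrow> real)" for k using gs_spec by blast
  show "\<bar>gs k y\<bar> \<le> norm y" for k and y :: 'a using gs_spec by blast
qed

lemma total:
  assumes inf: "\<forall>B :: 'a set. finite B \<longrightarrow> span B \<noteq> UNIV"
    and w: "w \<in> closure (span (range (xs :: nat \<Rightarrow> 'a::real_normed_vector)))"
    and g0: "\<And>k. gs k w = 0"
  shows "w = 0"
proof (rule ccontr)
  assume "w \<noteq> 0"
  define \<epsilon> where "\<epsilon> = norm w / 4"
  have ep: "\<epsilon> > 0" using \<open>w \<noteq> 0\<close> unfolding \<epsilon>_def by simp
  obtain v where v: "v \<in> span (range xs)" "dist v w < \<epsilon>" using w ep closure_approachable by blast
  obtain N c where vN: "v = (\<Sum>i<N. c i *\<^sub>R xs i)" using span_range_sum[OF v(1)] by blast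
  define \<delta> where "\<delta> = \<epsilon> / (real N + 1)"
  have dp: "\<delta> > 0" using ep \<delta>_def by simp
  have "\<exists>r::rat. \<bar>c i - of_rat r\<bar> < \<delta>" for i
  proof -
    obtain r where "r \<in> \<rat>" "c i < r" "r < c i + \<delta>" using Rats_dense_in_real[of "c i" "c i + \<delta>"] dp by auto
    then obtain q where "r = of_rat q" by (auto elim: Rats_cases)
    thus ?thesis using \<open>c i < r\<close> \<open>r < c i + \<delta>\<close> by (intro exI[of _ q]) auto
  qed
  then obtain rq where rq: "\<And>i. \<bar>c i - of_rat (rq i)\<bar> < \<delta>" by metis
  define l where "l = map rq [0..<N]"
  define j where "j = prod_encode (to_nat l, N)"
  have Nj: "N \<le> j" unfolding j_def by (rule le_prod_encode_2)
  have "Dv (xs :: nat \<Rightarrow> 'a) j = (\<Sum>i<min (length l) (Suc j). of_rat (l!i) *\<^sub>R (xs i :: 'a))"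
    unfolding Dv_def j_def Let_def by simp
  also have "min (length l) (Suc j) = N" using Nj unfolding l_def by simp
  also have "(\<Sum>i<N. of_rat (l!i) *\<^sub>R (xs i :: 'a)) = (\<Sum>i<N. of_rat (rq i) *\<^sub>R xs i)"
    unfolding l_def by (intro sum.cong) auto
  finally have dj: "Dv (xs :: nat \<Rightarrow> 'a) j = (\<Sum>i<N. of_rat (rq i) *\<^sub>R xs i)" .
  define d where "d = Dv (xs :: nat \<Rightarrow> 'a) j"
  have vmd: "v - d = (\<Sum>i<N. (c i - of_rat (rq i)) *\<^sub>R (xs i :: 'a))"
    unfolding vN d_def dj by (simp add: sum_subtractf scaleR_diff_left)
  have "norm (v - d) \<le> (\<Sum>i<N. norm ((c i - of_rat (rq i)) *\<^sub>R (xs i :: 'a)))"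
    unfolding vmd by (rule norm_sum)
  also have "\<dots> \<le> (\<Sum>i<N. \<delta>)"
  proof (intro sum_mono)
    fix i
    have "norm (xs i :: 'a) \<le> 1" using xs_spec[OF inf, of i] unfolding rr_def by simp
    hence "\<bar>c i - of_rat (rq i)\<bar> * norm (xs i :: 'a) \<le> \<delta> * 1"
      using rq[of i] by (intro mult_mono) auto
    thus "norm ((c i - of_rat (rq i)) *\<^sub>R (xs i :: 'a)) \<le> \<delta>" by simp
  qed
  also have "\<dots> < \<epsilon>" unfolding \<delta>_def using ep by (simp add: field_simps)
  finally have vd: "norm (v - d) < \<epsilon>" .
  have wd: "norm (w - d) < 2 * \<epsilon>"
    using norm_triangle_ineq[of "w - v" "v - d"] vd v(2) by (simp add: dist_norm norm_minus_commute)
  interpret gfam "gs :: nat \<Rightarrow> 'a \<Rightarrow> real" by (rule gs_fam)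
  have "gs j d = norm d" using gs_spec unfolding d_def by blast
  moreover have "gs j (d - w) = gs j d - gs j w" using linear_diff[OF lin] by blast
  moreover have "\<bar>gs j (d - w)\<bar> \<le> norm (d - w)" by (rule gb)
  ultimately have "norm d \<le> norm (w - d)" using g0 by (simp add: norm_minus_commute)
  hence "norm w \<le> 2 * norm (w - d)" using norm_triangle_ineq[of "w - d" d] by simp
  thus False using wd \<epsilon>_def by simp
qed

definition AA :: "(nat \<Rightarrow> real) set" where
  "AA = {a. (\<forall>n. 0 \<le> a n) \<and> (\<forall>N. (\<Sum>n<N. a n) \<le> 1)}"

definition Phi :: "(nat \<Rightarrow> 'a::real_normed_vector) \<Rightarrow> (nat \<Rightarrow> real) \<Rightarrow> 'a" where
  "Phi X a = (\<Sum>n. a n *\<^sub>R X n)"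

lemma AA_summable: "a \<in> AA \<Longrightarrow> summable a"
  unfolding AA_def by (intro summableI_nonneg_bounded[of _ 1]) auto

lemma AA_le1: "a \<in> AA \<Longrightarrow> suminf a \<le> 1"
  using AA_summable unfolding AA_def by (intro suminf_le_const) auto

lemma AA_single: "(\<lambda>r. if r = i then 1 else 0) \<in> AA"
proof -
  have "(\<Sum>n<N. (if n = i then 1 else 0::real)) \<le> 1" for N
    by (subst sum.delta) auto
  thus ?thesis unfolding AA_def by auto
qed

lemma AA_convex:
  assumes ab: "a \<in> AA" "b \<in> AA" and uv: "0 \<le> u" "0 \<le> v" "u + v = 1"
  shows "(\<lambda>n. u * a n + v * b n) \<in> AA"
proof -
  have "(\<Sum>n<N. u * a n + v * b n) \<le> 1" for N
  proof -
    have "(\<Sum>n<N. u * a n + v * b n) = u * (\<Sum>n<N. a n) + v * (\<Sum>n<N. b n)"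
      by (simp add: sum.distrib sum_distrib_left)
    also have "\<dots> \<le> u * 1 + v * 1" using ab uv unfolding AA_def by (intro add_mono mult_left_mono) auto
    finally show ?thesis using uv by simp
  qed
  moreover have "0 \<le> u * a n + v * b n" for n using ab uv unfolding AA_def by simp
  ultimately show ?thesis unfolding AA_def by blast
qed

lemma AA_abs_summable: "a \<in> AA \<Longrightarrow> summable (\<lambda>n. \<bar>a n\<bar>)"
proof -
  assume a: "a \<in> AA"
  have "(\<lambda>n. \<bar>a n\<bar>) = a" using a unfolding AA_def by auto
  thus ?thesis using AA_summable[OF a] by simp
qed

lemma AA_diff_summable: "a \<in> AA \<Longrightarrow> b \<in> AA \<Longrightarrow> summable (\<lambda>n. \<bar>b n - a n\<bar>)"
proof -
  assume "a \<in> AA" "b \<in> AA"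
  hence "summable (\<lambda>n. b n + a n)" by (intro summable_add AA_summable)
  moreover have le: "norm \<bar>b n - a n\<bar> \<le> b n + a n" for n
  proof -
    have "0 \<le> a n" "0 \<le> b n" using \<open>a \<in> AA\<close> \<open>b \<in> AA\<close> unfolding AA_def by auto
    thus ?thesis by simp
  qed
  ultimately show ?thesis using summable_comparison_test'[of "\<lambda>n. b n + a n" 0 "\<lambda>n. \<bar>b n - a n\<bar>"] by blast
qed

locale seqX =
  fixes X :: "nat \<Rightarrow> 'a::banach"
  assumes Xb: "\<And>n. norm (X n) \<le> 1"
begin

lemma sumX: "summable (\<lambda>n. \<bar>c n\<bar>) \<Longrightarrow> summable (\<lambda>n. c n *\<^sub>R X n)"
proof -
  assume a: "summable (\<lambda>n. \<bar>c n\<bar>)"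
  have "norm (norm (c n *\<^sub>R X n)) \<le> \<bar>c n\<bar>" for n
    using Xb[of n] by (simp add: mult_left_le)
  hence "summable (\<lambda>n. norm (c n *\<^sub>R X n))" by (intro summable_comparison_test'[OF a]) auto
  thus ?thesis by (rule summable_norm_cancel)
qed

lemma Phi_diff: "a \<in> AA \<Longrightarrow> b \<in> AA \<Longrightarrow> Phi X b - Phi X a = (\<Sum>n. (b n - a n) *\<^sub>R X n)"
proof -
  assume a: "a \<in> AA" and b: "b \<in> AA"
  have sa: "summable (\<lambda>n. a n *\<^sub>R X n)" and sb: "summable (\<lambda>n. b n *\<^sub>R X n)"
    using a b by (auto intro!: sumX AA_abs_summable)
  show ?thesis unfolding Phi_def using suminf_diff[OF sb sa] by (simp add: scaleR_diff_left)
qed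

lemma Phi_norm: "a \<in> AA \<Longrightarrow> norm (Phi X a) \<le> 1"
proof -
  assume a: "a \<in> AA"
  have s: "summable (\<lambda>n. norm (a n *\<^sub>R X n))"
    using summable_comparison_test'[OF AA_summable[OF a], of 0 "\<lambda>n. norm (a n *\<^sub>R X n)"] Xb a
    unfolding AA_def by (auto simp: mult_left_le)
  have "norm (Phi X a) \<le> (\<Sum>n. norm (a n *\<^sub>R X n))" unfolding Phi_def by (rule summable_norm[OF s])
  also have "\<dots> \<le> suminf a" using a Xb unfolding AA_def
    by (intro suminf_le s AA_summable[OF a]) (auto simp: mult_left_le)
  also have "\<dots> \<le> 1" by (rule AA_le1[OF a])
  finally show ?thesis .
qed

lemma Phi_single: "Phi X (\<lambda>r. if r = i then 1 else 0) = X i"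
proof -
  have "(\<lambda>r. (if r = i then 1 else 0) *\<^sub>R X r) = (\<lambda>r. if r = i then X r else 0)" by auto
  thus ?thesis unfolding Phi_def using sums_single[of i X] sums_unique by metis
qed

lemma Phi_convex: "a \<in> AA \<Longrightarrow> b \<in> AA \<Longrightarrow> Phi X (\<lambda>n. u * a n + v * b n) = u *\<^sub>R Phi X a + v *\<^sub>R Phi X b"
proof -
  assume a: "a \<in> AA" and b: "b \<in> AA"
  have sa: "summable (\<lambda>n. a n *\<^sub>R X n)" and sb: "summable (\<lambda>n. b n *\<^sub>R X n)"
    using a b by (auto intro!: sumX AA_abs_summable)
  have "u *\<^sub>R Phi X a + v *\<^sub>R Phi X b = (\<Sum>n. u *\<^sub>R (a n *\<^sub>R X n)) + (\<Sum>n. v *\<^sub>R (b n *\<^sub>R X n))"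
    unfolding Phi_def using sa sb by (simp add: suminf_scaleR_right)
  also have "\<dots> = (\<Sum>n. u *\<^sub>R (a n *\<^sub>R X n) + v *\<^sub>R (b n *\<^sub>R X n))"
    by (intro suminf_add summable_scaleR_right sa sb)
  also have "\<dots> = Phi X (\<lambda>n. u * a n + v * b n)" unfolding Phi_def by (simp add: scaleR_add_left)
  finally show ?thesis by simp
qed

lemma sum_in_closure:
  assumes T: "subspace T" and XT: "\<And>n. X n \<in> T" and c: "summable (\<lambda>n. \<bar>c n\<bar>)"
  shows "(\<Sum>n. c n *\<^sub>R X n) \<in> closure T"
proof -
  have l: "(\<lambda>m. \<Sum>n<m. c n *\<^sub>R X n) \<longlonglongrightarrow> (\<Sum>n. c n *\<^sub>R X n)" by (intro summable_LIMSEQ sumX c)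
  have i: "(\<Sum>n<m. c n *\<^sub>R X n) \<in> T" for m
    by (rule subspace_sum[OF T]) (rule subspace_scale[OF T XT])
  show ?thesis unfolding closure_sequential by (rule exI[of _ "\<lambda>m. \<Sum>n<m. c n *\<^sub>R X n"]) (use l i in blast)
qed

end

lemma seminorm_topology:
  fixes p :: "'a::real_normed_vector \<Rightarrow> real"
  assumes p0: "\<And>a. p a \<ge> 0" and padd: "\<And>a b. p (a+b) \<le> p a + p b"
    and psc: "\<And>c a. p (c *\<^sub>R a) \<le> \<bar>c\<bar> * p a" and pC: "\<And>a. p a \<le> C * norm a"
    and pdef: "\<And>a. p a = 0 \<Longrightarrow> a = 0" and C: "C > 0"
  defines "\<tau> \<equiv> topology (\<lambda>U. \<forall>y\<in>U. \<exists>e>0. \<forall>z. p (z - y) < e \<longrightarrow> z \<in> U)"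
  shows "locally_convex_topology \<tau> \<and> Hausdorff_space \<tau> \<and> (\<forall>U. openin \<tau> U \<longrightarrow> open U)
     \<and> (\<forall>U. openin \<tau> U \<longleftrightarrow> (\<forall>y\<in>U. \<exists>e>0. \<forall>z. p (z - y) < e \<longrightarrow> z \<in> U))"
proof -
  define L where "L = (\<lambda>U. \<forall>y\<in>U. \<exists>e>0. \<forall>z. p (z - y) < e \<longrightarrow> z \<in> U)"
  have pneg: "p (- a) = p a" for a
    using psc[of "-1" a] psc[of "-1" "-a"] by simp
  have pcom: "p (a - b) = p (b - a)" for a b using pneg[of "a - b"] by simp
  have ptri: "p (a - c) \<le> p (a - b) + p (b - c)" for a b c
    using padd[of "a - b" "b - c"] by simp
  have "istopology L" unfolding istopology_def L_def
  proof (intro conjI allI impI ballI)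
    fix S T y assume S: "\<forall>y\<in>S. \<exists>e>0. \<forall>z. p (z - y) < e \<longrightarrow> z \<in> S"
      and T: "\<forall>y\<in>T. \<exists>e>0. \<forall>z. p (z - y) < e \<longrightarrow> z \<in> T" and y: "y \<in> S \<inter> T"
    then obtain e1 e2 where "e1 > 0" "\<forall>z. p (z - y) < e1 \<longrightarrow> z \<in> S" "e2 > 0" "\<forall>z. p (z - y) < e2 \<longrightarrow> z \<in> T"
      by blast
    thus "\<exists>e>0. \<forall>z. p (z - y) < e \<longrightarrow> z \<in> S \<inter> T"
      by (intro exI[of _ "min e1 e2"]) auto
  next
    fix K y assume K: "\<forall>U\<in>K. \<forall>y\<in>U. \<exists>e>0. \<forall>z. p (z - y) < e \<longrightarrow> z \<in> U" and "y \<in> \<Union>K"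
    then obtain U where U: "U \<in> K" "y \<in> U" by blast
    with K obtain e where "e > 0" "\<forall>z. p (z - y) < e \<longrightarrow> z \<in> U" by blast
    thus "\<exists>e>0. \<forall>z. p (z - y) < e \<longrightarrow> z \<in> \<Union>K" using U by blast
  qed
  hence op: "openin \<tau> U \<longleftrightarrow> L U" for U unfolding \<tau>_def L_def[symmetric] by simp
  have opE: "\<exists>e>0. \<forall>z. p (z - y) < e \<longrightarrow> z \<in> U" if "openin \<tau> U" "y \<in> U" for U y
  proof -
    have "L U" using op that(1) by blast
    thus ?thesis unfolding L_def using that(2) by blast
  qed
  have ballo: "openin \<tau> {z. p (z - y) < e}" for y e
    unfolding op L_def
  proof (intro ballI)
    fix z assume "z \<in> {z. p (z - y) < e}"
    hence "e - p (z - y) > 0" by simp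
    moreover have "\<forall>w. p (w - z) < e - p (z - y) \<longrightarrow> w \<in> {z. p (z - y) < e}"
      using ptri by (smt (verit) mem_Collect_eq)
    ultimately show "\<exists>e'>0. \<forall>w. p (w - z) < e' \<longrightarrow> w \<in> {z. p (z - y) < e}" by blast
  qed
  have pz: "p 0 = 0" using psc[of 0 0] p0[of 0] by simp
  have ctr: "y \<in> {z. p (z - y) < e}" if "e > 0" for y e using that pz by simp
  have top: "topspace \<tau> = UNIV"
  proof -
    have "L UNIV" unfolding L_def using zero_less_one by blast
    hence "openin \<tau> UNIV" using op by blast
    thus ?thesis using openin_subset by blast
  qed
  have coarse: "open U" if "openin \<tau> U" for U
  proof -
    show ?thesis unfolding open_dist
    proof (intro ballI)
      fix y assume "y \<in> U"
      then obtain e where e: "e > 0" "\<forall>z. p (z - y) < e \<longrightarrow> z \<in> U" using opE[OF \<open>openin \<tau> U\<close>] by blast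
      have "\<forall>z. dist z y < e / C \<longrightarrow> z \<in> U"
      proof (intro allI impI)
        fix z assume "dist z y < e / C"
        hence "C * norm (z - y) < e" using C by (simp add: dist_norm field_simps)
        hence "p (z - y) < e" using pC[of "z - y"] by linarith
        thus "z \<in> U" using e(2) by blast
      qed
      thus "\<exists>e>0. \<forall>z. dist z y < e \<longrightarrow> z \<in> U" using e C by (intro exI[of _ "e/C"]) auto
    qed
  qed
  have haus: "Hausdorff_space \<tau>" unfolding Hausdorff_space_def
  proof (intro allI impI)
    fix x y :: 'a assume "x \<in> topspace \<tau> \<and> y \<in> topspace \<tau> \<and> x \<noteq> y"
    hence d: "p (x - y) > 0" using pdef p0 by (metis eq_iff_diff_eq_0 less_eq_real_def)
    define e where "e = p (x - y) / 2"
    have "disjnt {z. p (z - x) < e} {z. p (z - y) < e}"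
      unfolding disjnt_def
    proof (rule ccontr)
      assume "{z. p (z - x) < e} \<inter> {z. p (z - y) < e} \<noteq> {}"
      then obtain z where "p (z - x) < e" "p (z - y) < e" by blast
      moreover have "p (x - y) \<le> p (x - z) + p (z - y)" by (rule ptri)
      ultimately show False using pcom[of x z] e_def by linarith
    qed
    thus "\<exists>U V. openin \<tau> U \<and> openin \<tau> V \<and> x \<in> U \<and> y \<in> V \<and> disjnt U V"
    proof -
      have "e > 0" using d e_def by simp
      thus ?thesis using ballo[of x e] ballo[of y e] ctr[of e x] ctr[of e y] \<open>disjnt _ _\<close> by blast
    qed
  qed
  have cadd: "continuous_map (prod_topology \<tau> \<tau>) \<tau> (\<lambda>(x, y). x + y)"
    unfolding continuous_map_def
  proof (intro conjI allI impI)
    show "(\<lambda>(x, y). x + y) \<in> topspace (prod_topology \<tau> \<tau>) \<rightarrow> topspace \<tau>" using top by simp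
  next
    fix U assume U: "openin \<tau> U"
    show "openin (prod_topology \<tau> \<tau>) {x \<in> topspace (prod_topology \<tau> \<tau>). (case x of (x, y) \<Rightarrow> x + y) \<in> U}"
      unfolding openin_prod_topology_alt
    proof (intro allI impI)
      fix a b assume "(a, b) \<in> {x \<in> topspace (prod_topology \<tau> \<tau>). (case x of (x, y) \<Rightarrow> x + y) \<in> U}"
      hence "a + b \<in> U" by simp
      then obtain e where e: "e > 0" "\<forall>z. p (z - (a + b)) < e \<longrightarrow> z \<in> U" using opE[OF U] by blast
      have "u + v \<in> U" if "p (u - a) < e/2" "p (v - b) < e/2" for u v
      proof -
        note that
        moreover have "p (u + v - (a + b)) \<le> p (u - a) + p (v - b)"
          using padd[of "u - a" "v - b"] by (simp add: algebra_simps)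
        ultimately show ?thesis using e by simp
      qed
      hence "{z. p (z - a) < e/2} \<times> {z. p (z - b) < e/2} \<subseteq> {x \<in> topspace (prod_topology \<tau> \<tau>). (case x of (x, y) \<Rightarrow> x + y) \<in> U}"
        using top by auto
      thus "\<exists>U' V. openin \<tau> U' \<and> openin \<tau> V \<and> a \<in> U' \<and> b \<in> V \<and> U' \<times> V \<subseteq> {x \<in> topspace (prod_topology \<tau> \<tau>). (case x of (x, y) \<Rightarrow> x + y) \<in> U}"
      proof -
        have "e/2 > 0" using e by simp
        thus ?thesis using ballo[of a "e/2"] ballo[of b "e/2"] ctr[of "e/2" a] ctr[of "e/2" b] \<open>_ \<subseteq> _\<close> by blast
      qed
    qed
  qed
  have cmul: "continuous_map (prod_topology (euclidean :: real topology) \<tau>) \<tau> (\<lambda>(c, x). c *\<^sub>R x)"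
    unfolding continuous_map_def
  proof (intro conjI allI impI)
    show "(\<lambda>(c, x). c *\<^sub>R x) \<in> topspace (prod_topology euclidean \<tau>) \<rightarrow> topspace \<tau>" using top by simp
  next
    fix U assume U: "openin \<tau> U"
    show "openin (prod_topology euclidean \<tau>) {x \<in> topspace (prod_topology euclidean \<tau>). (case x of (c, x) \<Rightarrow> c *\<^sub>R x) \<in> U}"
      unfolding openin_prod_topology_alt
    proof (intro allI impI)
      fix c a assume "(c, a) \<in> {x \<in> topspace (prod_topology euclidean \<tau>). (case x of (c, x) \<Rightarrow> c *\<^sub>R x) \<in> U}"
      hence "c *\<^sub>R a \<in> U" by simp
      then obtain e where e: "e > 0" "\<forall>z. p (z - c *\<^sub>R a) < e \<longrightarrow> z \<in> U" using opE[OF U] by blast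
      define d where "d = min 1 (e / (\<bar>c\<bar> + 2 + p a))"
      have dpos: "d > 0" unfolding d_def using e p0[of a] by simp
      have d1: "d \<le> 1" unfolding d_def by simp
      have d2: "d * (\<bar>c\<bar> + 2 + p a) \<le> e" unfolding d_def using e p0[of a]
        by (smt (verit, del_insts) divide_pos_pos le_divide_eq min.cobounded2)
      have "c' *\<^sub>R v \<in> U" if c': "c' \<in> ball c d" and v: "p (v - a) < d" for c' v
      proof -
        have cc: "\<bar>c' - c\<bar> < d" using c' by (simp add: dist_real_def abs_minus_commute)
        have "c' *\<^sub>R v - c *\<^sub>R a = c' *\<^sub>R (v - a) + (c' - c) *\<^sub>R a" by (simp add: algebra_simps)
        hence "p (c' *\<^sub>R v - c *\<^sub>R a) \<le> p (c' *\<^sub>R (v - a)) + p ((c' - c) *\<^sub>R a)" using padd by simp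
        also have "\<dots> \<le> \<bar>c'\<bar> * p (v - a) + \<bar>c' - c\<bar> * p a" using psc by (meson add_mono)
        also have "\<dots> \<le> (\<bar>c\<bar> + 1) * d + d * p a"
        proof (rule add_mono)
          have "\<bar>c'\<bar> \<le> \<bar>c\<bar> + 1" using cc d1 by linarith
          thus "\<bar>c'\<bar> * p (v - a) \<le> (\<bar>c\<bar> + 1) * d" using v p0[of "v - a"] by (intro mult_mono) auto
          show "\<bar>c' - c\<bar> * p a \<le> d * p a" using cc p0 by (simp add: mult_right_mono)
        qed
        also have "\<dots> < e" using d2 dpos by (simp add: algebra_simps)
        finally show ?thesis using e by simp
      qed
      hence sub: "ball c d \<times> {z. p (z - a) < d} \<subseteq> {x \<in> topspace (prod_topology euclidean \<tau>). (case x of (c, x) \<Rightarrow> c *\<^sub>R x) \<in> U}"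
        using top by auto
      have cb: "c \<in> ball c d" using dpos by simp
      show "\<exists>U' V. openin euclidean U' \<and> openin \<tau> V \<and> c \<in> U' \<and> a \<in> V \<and> U' \<times> V \<subseteq> {x \<in> topspace (prod_topology euclidean \<tau>). (case x of (c, x) \<Rightarrow> c *\<^sub>R x) \<in> U}"
      proof -
        have "openin euclidean (ball c d)" by (metis open_ball open_openin)
        thus ?thesis using ballo[of a d] ctr[of d a] dpos sub cb by blast
      qed
    qed
  qed
  have lc: "\<exists>V. openin \<tau> V \<and> convex V \<and> x \<in> V \<and> V \<subseteq> U" if "openin \<tau> U" "x \<in> U" for x U
  proof -
    obtain e where e: "e > 0" "\<forall>z. p (z - x) < e \<longrightarrow> z \<in> U" using opE[OF \<open>openin \<tau> U\<close> \<open>x \<in> U\<close>] by blast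
    have "convex {z. p (z - x) < e}" unfolding convex_def
    proof (intro ballI allI impI)
      fix y z :: 'a and u v :: real assume yz: "y \<in> {z. p (z - x) < e}" "z \<in> {z. p (z - x) < e}"
        and uv: "0 \<le> u" "0 \<le> v" "u + v = 1"
      have "u *\<^sub>R y + v *\<^sub>R z - x = u *\<^sub>R (y - x) + v *\<^sub>R (z - x)"
        using uv by (simp add: algebra_simps flip: scaleR_add_left)
      hence "p (u *\<^sub>R y + v *\<^sub>R z - x) \<le> p (u *\<^sub>R (y - x)) + p (v *\<^sub>R (z - x))"
        using padd by simp
      also have "\<dots> \<le> \<bar>u\<bar> * p (y - x) + \<bar>v\<bar> * p (z - x)" by (intro add_mono psc)
      finally have "p (u *\<^sub>R y + v *\<^sub>R z - x) \<le> u * p (y - x) + v * p (z - x)"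
        using uv by simp
      also have "\<dots> \<le> u * e + v * e" using yz uv by (intro add_mono mult_left_mono) auto
      also have "\<dots> = e" using uv by (metis distrib_right mult_1)
      finally have le: "p (u *\<^sub>R y + v *\<^sub>R z - x) \<le> e" .
      show "u *\<^sub>R y + v *\<^sub>R z \<in> {z. p (z - x) < e}"
      proof (cases "u = 0")
        case True thus ?thesis using uv yz by simp
      next
        case False
        hence "u > 0" using uv by simp
        hence "u * p (y - x) < u * e" using yz by simp
        moreover have "v * p (z - x) \<le> v * e" using yz uv by (simp add: mult_left_mono)
        moreover have "u * e + v * e = e" using uv by (metis distrib_right mult_1)
        ultimately have "u * p (y - x) + v * p (z - x) < e" by linarith
        thus ?thesis using \<open>p (u *\<^sub>R y + v *\<^sub>R z - x) \<le> u * p (y - x) + v * p (z - x)\<close> by simp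
      qed
    qed
    moreover have "{z. p (z - x) < e} \<subseteq> U" using e by blast
    ultimately show ?thesis using ballo[of x e] ctr[of e x] e(1) by blast
  qed
  have "locally_convex_topology \<tau>" unfolding locally_convex_topology_def
    using top cadd cmul lc by blast
  moreover have "openin \<tau> U \<longleftrightarrow> (\<forall>y\<in>U. \<exists>e>0. \<forall>z. p (z - y) < e \<longrightarrow> z \<in> U)" for U
    using op[of U] unfolding L_def .
  ultimately show ?thesis using haus coarse by blast
qed

lemma geo_sum: "(\<Sum>k. (1/2::real)^k * C) = 2 * C"
proof -
  have "(\<Sum>k. (1/2::real)^k * C) = (\<Sum>k. (1/2::real)^k) * C"
    by (intro suminf_mult2[symmetric] summable_geometric) simp
  also have "\<dots> = 2 * C" by (subst suminf_geometric) simp_all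
  finally show ?thesis .
qed

lemma aux_div: "(D::real) \<noteq> 0 \<Longrightarrow> e * D / (2 * D) = e / 2" by simp

context seqX
begin

lemma Phi_cont:
  fixes g :: "nat \<Rightarrow> 'a \<Rightarrow> real" and T :: "'a set"
  assumes T: "subspace T" and XT: "\<And>n. X n \<in> T" and G: "gfam g"
    and gz: "\<And>k n. k < n \<Longrightarrow> g k (X n) = 0" and a: "a \<in> AA" and e: "e > 0"
  shows "\<exists>M \<delta>. \<delta> > 0 \<and> (\<forall>b\<in>AA. (\<forall>i<M. \<bar>b i - a i\<bar> < \<delta>) \<longrightarrow>
            infdist (Phi X b - Phi X a) T + qq g (Phi X b - Phi X a) < e)"
proof -
  interpret gfam g by (rule G)
  obtain M where M: "(1/2::real)^M < e/8" using real_arch_pow_inv[of "e/8" "1/2"] e by auto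
  define \<delta> where "\<delta> = e / (2 * (real M * real M + 1))"
  have D: "0 < real M * real M + 1" by (simp add: add_nonneg_pos)
  hence "2 * (real M * real M + 1) > 0" by (simp only: mult_pos_pos zero_less_numeral)
  hence dpos: "\<delta> > 0" unfolding \<delta>_def using e by (intro divide_pos_pos)
  have "infdist (Phi X b - Phi X a) T + qq g (Phi X b - Phi X a) < e"
    if b: "b \<in> AA" and close: "\<forall>i<M. \<bar>b i - a i\<bar> < \<delta>" for b
  proof -
    define w where "w = Phi X b - Phi X a"
    have sabs: "summable (\<lambda>n. \<bar>b n - a n\<bar>)" by (rule AA_diff_summable[OF a b])
    have wsum: "w = (\<Sum>n. (b n - a n) *\<^sub>R X n)" unfolding w_def by (rule Phi_diff[OF a b])
    have sf: "summable (\<lambda>n. (b n - a n) *\<^sub>R X n)" by (rule sumX[OF sabs])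
    have "w \<in> closure T" unfolding wsum by (rule sum_in_closure[OF T XT sabs])
    hence id0: "infdist w T = 0" using in_closure_iff_infdist_zero[of T w] T subspace_0 by blast
    have gk: "\<bar>g k w\<bar> \<le> (\<Sum>n<Suc k. \<bar>b n - a n\<bar>)" for k
    proof -
      have "g k w = (\<Sum>n. g k ((b n - a n) *\<^sub>R X n))" unfolding wsum
        by (rule bounded_linear.suminf[OF bl sf])
      also have "\<dots> = (\<Sum>n<Suc k. g k ((b n - a n) *\<^sub>R X n))"
        by (rule suminf_finite) (auto simp: gsc gz)
      finally have gkw: "g k w = (\<Sum>n<Suc k. g k ((b n - a n) *\<^sub>R X n))" .
      have "\<bar>g k w\<bar> \<le> (\<Sum>n<Suc k. \<bar>g k ((b n - a n) *\<^sub>R X n)\<bar>)"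
        unfolding gkw by (rule sum_abs)
      also have "\<dots> \<le> (\<Sum>n<Suc k. \<bar>b n - a n\<bar>)"
      proof (intro sum_mono)
        fix n
        have "\<bar>g k (X n)\<bar> \<le> 1" using gb[of k "X n"] Xb[of n] by linarith
        thus "\<bar>g k ((b n - a n) *\<^sub>R X n)\<bar> \<le> \<bar>b n - a n\<bar>"
          by (simp add: gsc abs_mult mult_left_le)
      qed
      finally show ?thesis .
    qed
    have w2: "\<bar>g k w\<bar> \<le> 2" for k
    proof -
      have "norm w \<le> norm (Phi X b) + norm (Phi X a)" unfolding w_def by (rule norm_triangle_ineq4)
      also have "\<dots> \<le> 2" using Phi_norm[OF a] Phi_norm[OF b] by simp
      finally show ?thesis using gb[of k w] by linarith
    qed
    have qs: "qq g w = (\<Sum>n. (1/2)^(n+M) * \<bar>g (n+M) w\<bar>) + (\<Sum>k<M. (1/2)^k * \<bar>g k w\<bar>)"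
      unfolding qq_def by (rule suminf_split_initial_segment[OF qsum])
    have tail: "(\<Sum>n. (1/2::real)^(n+M) * \<bar>g (n+M) w\<bar>) \<le> 4 * (1/2)^M"
    proof -
      have "(\<Sum>n. (1/2::real)^(n+M) * \<bar>g (n+M) w\<bar>) \<le> (\<Sum>n. (1/2::real)^n * ((1/2)^M * 2))"
      proof (rule suminf_le)
        fix n
        have "(1/2::real)^(n+M) * \<bar>g (n+M) w\<bar> \<le> (1/2::real)^(n+M) * 2"
          using w2 by (intro mult_left_mono) auto
        thus "(1/2::real)^(n+M) * \<bar>g (n+M) w\<bar> \<le> (1/2::real)^n * ((1/2)^M * 2)"
          by (simp add: power_add mult.assoc)
      next
        show "summable (\<lambda>n. (1/2::real)^(n+M) * \<bar>g (n+M) w\<bar>)"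
          using qsum[of w] by (rule summable_ignore_initial_segment)
        show "summable (\<lambda>n. (1/2::real)^n * ((1/2)^M * 2))" by (rule geo)
      qed
      also have "\<dots> = 4 * (1/2)^M" by (simp add: geo_sum)
      finally show ?thesis .
    qed
    have head: "(\<Sum>k<M. (1/2::real)^k * \<bar>g k w\<bar>) \<le> real M * (real M * \<delta>)"
    proof -
      have "(\<Sum>k<M. (1/2::real)^k * \<bar>g k w\<bar>) \<le> (\<Sum>k<M. real M * \<delta>)"
      proof (intro sum_mono)
        fix k assume k: "k \<in> {..<M}"
        have "\<bar>g k w\<bar> \<le> (\<Sum>n<Suc k. \<delta>)"
          using gk[of k] sum_mono[of "{..<Suc k}" "\<lambda>n. \<bar>b n - a n\<bar>" "\<lambda>_. \<delta>"] close k
          by (smt (verit, ccfv_SIG) lessThan_iff less_Suc_eq_le order_le_less_trans less_imp_le)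
        also have "\<dots> = real (Suc k) * \<delta>" by simp
        also have "\<dots> \<le> real M * \<delta>" using k dpos by (intro mult_right_mono) auto
        finally have gkM: "\<bar>g k w\<bar> \<le> real M * \<delta>" .
        have "(1/2::real)^k \<le> 1" by (simp add: power_le_one)
        thus "(1/2::real)^k * \<bar>g k w\<bar> \<le> real M * \<delta>"
          using gkM by (metis abs_ge_zero mult_left_le_one_le order_trans zero_le_divide_1_iff zero_le_power zero_le_numeral)
      qed
      also have "\<dots> = real M * (real M * \<delta>)" by simp
      finally show ?thesis .
    qed
    have "real M * (real M * \<delta>) < e / 2"
    proof -
      have "real M * (real M * \<delta>) = e * (real M * real M) / (2 * (real M * real M + 1))"
        unfolding \<delta>_def by (simp add: field_simps)
      also have "\<dots> < e * (real M * real M + 1) / (2 * (real M * real M + 1))"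
        using e D by (intro divide_strict_right_mono) auto
      also have "\<dots> = e / 2" using aux_div[of "real M * real M + 1" e] D by linarith
      finally show ?thesis .
    qed
    hence "qq g w < e" using qs tail head M by linarith
    thus ?thesis using id0 unfolding w_def by simp
  qed
  thus ?thesis using dpos by blast
qed

end

lemma AA_closed_compact:
  "compactin (product_topology (\<lambda>_. euclideanreal) UNIV) AA"
proof -
  let ?P = "product_topology (\<lambda>_::nat. euclideanreal) UNIV"
  have top: "topspace ?P = UNIV" by simp
  have B: "compactin ?P (PiE UNIV (\<lambda>_. {0..1::real}))" by (simp add: compactin_PiE)
  have sub: "AA \<subseteq> PiE UNIV (\<lambda>_. {0..1::real})"
  proof
    fix a assume a: "a \<in> AA"
    have "a n \<le> 1" for n
    proof -
      have "a n \<le> (\<Sum>i<Suc n. a i)" using a unfolding AA_def by (intro member_le_sum) auto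
      also have "\<dots> \<le> 1" using a unfolding AA_def by blast
      finally show ?thesis .
    qed
    thus "a \<in> PiE UNIV (\<lambda>_. {0..1::real})" using a unfolding AA_def by auto
  qed
  have c1: "closedin ?P {x \<in> topspace ?P. x n \<in> {0..}}" for n
    by (rule closedin_continuous_map_preimage[OF continuous_map_product_projection]) auto
  have c2: "closedin ?P {x \<in> topspace ?P. (\<Sum>i<N. x i) \<in> {..1}}" for N
    by (rule closedin_continuous_map_preimage)
       (auto intro!: continuous_map_sum continuous_map_product_projection)
  have eq: "AA = (\<Inter>n. {x \<in> topspace ?P. x n \<in> {0..}}) \<inter> (\<Inter>N. {x \<in> topspace ?P. (\<Sum>i<N. x i) \<in> {..1}})"
    unfolding AA_def top by auto
  have "closedin ?P AA" unfolding eq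
    by (intro closedin_Int closedin_Inter) (use c1 c2 in auto)
  thus ?thesis using closed_compactin[OF B sub] by blast
qed

context seqX
begin

lemma Phi_compact:
  fixes g :: "nat \<Rightarrow> 'a \<Rightarrow> real" and T :: "'a set" and \<tau> :: "'a topology"
  assumes T: "subspace T" and XT: "\<And>n. X n \<in> T" and G: "gfam g"
    and gz: "\<And>k n. k < n \<Longrightarrow> g k (X n) = 0"
    and op: "\<And>U. openin \<tau> U \<longleftrightarrow> (\<forall>y\<in>U. \<exists>e>0. \<forall>z. infdist (z - y) T + qq g (z - y) < e \<longrightarrow> z \<in> U)"
    and top: "topspace \<tau> = UNIV"
  shows "compactin \<tau> (Phi X ` AA)"
proof -
  let ?P = "product_topology (\<lambda>_::nat. euclideanreal) UNIV"
  have "continuous_map (subtopology ?P AA) \<tau> (Phi X)"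
    unfolding continuous_map_def
  proof (intro conjI allI impI)
    show "Phi X \<in> topspace (subtopology ?P AA) \<rightarrow> topspace \<tau>" using top by simp
  next
    fix U assume U: "openin \<tau> U"
    show "openin (subtopology ?P AA) {a \<in> topspace (subtopology ?P AA). Phi X a \<in> U}"
    proof (subst openin_subopen, intro ballI)
      fix a assume "a \<in> {a \<in> topspace (subtopology ?P AA). Phi X a \<in> U}"
      hence a: "a \<in> AA" "Phi X a \<in> U" by auto
      then obtain e where e: "e > 0" "\<forall>z. infdist (z - Phi X a) T + qq g (z - Phi X a) < e \<longrightarrow> z \<in> U"
        using U op by blast
      obtain M \<delta> where M: "\<delta> > 0" "\<forall>b\<in>AA. (\<forall>i<M. \<bar>b i - a i\<bar> < \<delta>) \<longrightarrow>
            infdist (Phi X b - Phi X a) T + qq g (Phi X b - Phi X a) < e"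
        using Phi_cont[OF T XT G gz a(1) e(1)] by blast
      define S where "S i = (if i < M then ball (a i) \<delta> else UNIV)" for i
      have "openin ?P (PiE UNIV S)"
      proof -
        have "finite {i \<in> UNIV. S i \<noteq> topspace euclideanreal}"
          by (rule finite_subset[of _ "{..<M}"]) (auto simp: S_def)
        moreover have "\<forall>i \<in> UNIV. openin euclideanreal (S i)" unfolding S_def by auto
        ultimately show ?thesis by (simp add: openin_PiE_gen)
      qed
      hence o: "openin (subtopology ?P AA) (AA \<inter> PiE UNIV S)" by (rule openin_subtopology_Int2)
      have ain: "a \<in> AA \<inter> PiE UNIV S" using a M unfolding S_def by auto
      have "AA \<inter> PiE UNIV S \<subseteq> {a \<in> topspace (subtopology ?P AA). Phi X a \<in> U}"
      proof
        fix b assume b: "b \<in> AA \<inter> PiE UNIV S"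
        have "\<bar>b i - a i\<bar> < \<delta>" if "i < M" for i
        proof -
          have "b i \<in> S i" using b by (auto simp: PiE_iff)
          thus ?thesis using that unfolding S_def by (simp add: dist_real_def abs_minus_commute)
        qed
        hence "\<forall>i<M. \<bar>b i - a i\<bar> < \<delta>" by blast
        hence "infdist (Phi X b - Phi X a) T + qq g (Phi X b - Phi X a) < e" using M b by blast
        hence "Phi X b \<in> U" using e by blast
        thus "b \<in> {a \<in> topspace (subtopology ?P AA). Phi X a \<in> U}" using b by simp
      qed
      thus "\<exists>T'. openin (subtopology ?P AA) T' \<and> a \<in> T' \<and> T' \<subseteq> {a \<in> topspace (subtopology ?P AA). Phi X a \<in> U}"
        using o ain by blast
    qed
  qed
  moreover have "compactin (subtopology ?P AA) AA"
    using AA_closed_compact by (simp add: compactin_subtopology)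
  ultimately show ?thesis by (intro image_compactin)
qed

end

theorem mainTheorem10:
  fixes X :: "'a::banach itself"
  assumes "\<forall>B :: 'a set. finite B \<longrightarrow> span B \<noteq> UNIV"
  shows "\<exists>(\<tau> :: 'a topology) (K :: 'a set).
           locally_convex_topology \<tau> \<and> Hausdorff_space \<tau> \<and>
           (\<forall>U. openin \<tau> U \<longrightarrow> open U) \<and>
           K \<noteq> {} \<and> compactin \<tau> K \<and> convex K \<and> \<not> remotal K 0"
proof -
  note inf = assms
  define T :: "'a set" where "T = span (range xs)"
  define p :: "'a \<Rightarrow> real" where "p w = infdist w T + qq gs w" for w
  interpret G: gfam "gs :: nat \<Rightarrow> 'a \<Rightarrow> real" by (rule gs_fam)
  have xn: "norm (xs n :: 'a) = rr n" for n using xs_spec[OF inf] by blast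
  have gz: "gs k (xs n :: 'a) = 0" if "k < n" for k n using xs_spec[OF inf] that by blast
  have rr1: "rr n < 1" for n unfolding rr_def by simp
  have rr0: "0 \<le> rr n" for n unfolding rr_def by (auto simp: field_simps)
  have xb: "norm (xs n :: 'a) \<le> 1" for n using xn[of n] rr1[of n] by simp
  interpret S: seqX "xs :: nat \<Rightarrow> 'a" by unfold_locales (rule xb)
  have Tsub: "subspace T" unfolding T_def by (rule subspace_span)
  have XT: "xs n \<in> T" for n unfolding T_def by (rule span_base) simp
  have Tne: "T \<noteq> {}" using XT by blast
  have p0: "p a \<ge> 0" for a unfolding p_def using infdist_nonneg[of a T] G.qnonneg[of a] by linarith
  have padd: "p (a + b) \<le> p a + p b" for a b
    unfolding p_def using infdist_sub_add[OF Tsub, of a b] G.qadd[of a b] by linarith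
  have psc: "p (c *\<^sub>R a) \<le> \<bar>c\<bar> * p a" for c a
    unfolding p_def using infdist_sub_scale[OF Tsub, of c a] G.qsc[of c a] by (simp add: distrib_left)
  have pC: "p a \<le> 3 * norm a" for a
    unfolding p_def using infdist_sub_norm[OF Tsub, of a] G.qnorm[of a] by linarith
  have pdef: "a = 0" if "p a = 0" for a
  proof -
    have "infdist a T = 0" "qq gs a = 0" using that infdist_nonneg[of a T] G.qnonneg[of a] unfolding p_def by linarith+
    hence "a \<in> closure T" "\<And>k. gs k a = 0" using in_closure_iff_infdist_zero[OF Tne] G.qzero by blast+
    thus ?thesis using total[OF inf] unfolding T_def by blast
  qed
  have c3: "(0::real) < 3" by simp
  define \<tau> where "\<tau> = topology (\<lambda>U. \<forall>y\<in>U. \<exists>e>0. \<forall>z. p (z - y) < e \<longrightarrow> z \<in> U)"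
  have H: "locally_convex_topology \<tau> \<and> Hausdorff_space \<tau> \<and> (\<forall>U. openin \<tau> U \<longrightarrow> open U)
     \<and> (\<forall>U. openin \<tau> U \<longleftrightarrow> (\<forall>y\<in>U. \<exists>e>0. \<forall>z. p (z - y) < e \<longrightarrow> z \<in> U))"
    unfolding \<tau>_def by (rule seminorm_topology[OF p0 padd psc pC pdef c3])
  have lct: "locally_convex_topology \<tau>" using H by (rule conjunct1)
  have top: "topspace \<tau> = UNIV" using lct unfolding locally_convex_topology_def by (rule conjunct1)
  have Hop: "openin \<tau> U \<longleftrightarrow> (\<forall>y\<in>U. \<exists>e>0. \<forall>z. p (z - y) < e \<longrightarrow> z \<in> U)" for U
    using H[THEN conjunct2, THEN conjunct2, THEN conjunct2] by (rule spec)
  define K :: "'a set" where "K = Phi xs ` AA"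
  have cpt: "compactin \<tau> K" unfolding K_def
  proof (rule S.Phi_compact[OF Tsub XT G.gfam_axioms gz])
    show "openin \<tau> U \<longleftrightarrow> (\<forall>y\<in>U. \<exists>e>0. \<forall>z. infdist (z - y) T + qq gs (z - y) < e \<longrightarrow> z \<in> U)" for U
      using Hop[of U] by (simp add: p_def)
    show "topspace \<tau> = UNIV" by (rule top)
  qed
  have sing: "(xs n :: 'a) \<in> K" for n
    unfolding K_def using S.Phi_single[of n] AA_single[of n] by (rule image_eqI[OF sym])
  hence Kne: "K \<noteq> {}" by blast
  have cvx: "convex K" unfolding convex_def K_def
  proof (intro ballI allI impI)
    fix x y :: 'a and u v :: real assume "x \<in> Phi xs ` AA" "y \<in> Phi xs ` AA" "0 \<le> u" "0 \<le> v" "u + v = (1::real)"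
    then obtain a b where ab: "a \<in> AA" "b \<in> AA" "x = Phi xs a" "y = Phi xs b" by blast
    hence "u *\<^sub>R x + v *\<^sub>R y = Phi xs (\<lambda>n. u * a n + v * b n)" using S.Phi_convex[OF ab(1,2), of u v] by simp
    moreover have "(\<lambda>n. u * a n + v * b n) \<in> AA" by (rule AA_convex[OF ab(1,2) \<open>0 \<le> u\<close> \<open>0 \<le> v\<close> \<open>u + v = 1\<close>])
    ultimately show "u *\<^sub>R x + v *\<^sub>R y \<in> Phi xs ` AA" by blast
  qed
  have lt1: "norm c < 1" if "c \<in> K" for c
  proof -
    obtain a where a: "a \<in> AA" "c = Phi xs a" using \<open>c \<in> K\<close> unfolding K_def by blast
    show ?thesis
    proof (cases "\<forall>n. a n = 0")
      case True thus ?thesis using a unfolding Phi_def by simp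
    next
      case False
      then obtain i where "a i \<noteq> 0" by blast
      have anon: "a n \<ge> 0" for n using a unfolding AA_def by blast
      have ai: "a i > 0" using anon[of i] \<open>a i \<noteq> 0\<close> by linarith
      have sa: "summable a" by (rule AA_summable[OF a(1)])
      have s1: "summable (\<lambda>n. a n * rr n)"
      proof (rule summable_comparison_test'[OF sa, of 0])
        fix n
        have "a n * rr n \<le> a n" using anon[of n] rr1[of n] by (simp add: mult_left_le)
        thus "norm (a n * rr n) \<le> a n" using anon[of n] rr0[of n] by simp
      qed
      have eqn: "(\<lambda>n. norm (a n *\<^sub>R (xs n :: 'a))) = (\<lambda>n. a n * rr n)" using anon xn by auto
      have "norm c \<le> (\<Sum>n. norm (a n *\<^sub>R (xs n :: 'a)))" unfolding a(2) Phi_def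
        by (rule summable_norm) (unfold eqn, rule s1)
      also have "\<dots> = (\<Sum>n. a n * rr n)" unfolding eqn ..
      also have "\<dots> < suminf a"
      proof -
        have "0 < (\<Sum>n. a n - a n * rr n)"
        proof (subst suminf_pos_iff)
          show "summable (\<lambda>n. a n - a n * rr n)" by (intro summable_diff sa s1)
          show "0 \<le> a n - a n * rr n" for n using anon[of n] rr1[of n] by (simp add: mult_left_le less_imp_le)
          show "\<exists>i. 0 < a i - a i * rr i" using ai rr1[of i] by (intro exI[of _ i]) (simp add: mult_less_cancel_left1)
        qed
        also have "\<dots> = suminf a - (\<Sum>n. a n * rr n)" by (rule suminf_diff[OF sa s1, symmetric])
        finally show ?thesis by simp
      qed
      also have "\<dots> \<le> 1" by (rule AA_le1[OF a(1)])
      finally show ?thesis .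
    qed
  qed
  have bdd: "bdd_above (norm ` K)" using lt1 by (intro bdd_aboveI[of _ 1]) (auto simp: less_imp_le)
  have sup1: "(SUP c\<in>K. norm c) = 1"
  proof (rule antisym)
    show "(SUP c\<in>K. norm c) \<le> 1" using Kne lt1 by (intro cSUP_least) (auto simp: less_imp_le)
    define S where "S = (SUP c\<in>K. norm c)"
    have rS: "rr n \<le> S" for n unfolding S_def using cSUP_upper[OF sing[of n] bdd] xn[of n] by simp
    show "1 \<le> (SUP c\<in>K. norm c)"
    proof (rule ccontr)
      assume "\<not> 1 \<le> (SUP c\<in>K. norm c)"
      hence S1: "S < 1" unfolding S_def by simp
      obtain n where n: "1 / (1 - S) < real n" using reals_Archimedean2 by blast
      have "1 < real n * (1 - S)" using n S1 by (simp add: field_simps)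
      hence "1 < (real n + 2) * (1 - S)" using S1 by (smt (verit) mult_right_mono)
      hence "1 / (real n + 2) < 1 - S" by (simp add: field_simps)
      hence "S < rr n" unfolding rr_def by simp
      thus False using rS[of n] by simp
    qed
  qed
  have "\<not> remotal K 0"
  proof
    assume "remotal K 0"
    then obtain c0 where c0: "c0 \<in> K" "norm (0 - c0) = (SUP c\<in>K. norm (0 - c))" unfolding remotal_def by blast
    hence "norm c0 = 1" using sup1 by simp
    thus False using lt1[OF c0(1)] by simp
  qed
  note nr = this
  have haus: "Hausdorff_space \<tau>" using H[THEN conjunct2] by (rule conjunct1)
  have coarse: "\<forall>U. openin \<tau> U \<longrightarrow> open U" using H[THEN conjunct2, THEN conjunct2] by (rule conjunct1)
  show ?thesis
    by (rule exI[of _ \<tau>], rule exI[of _ K]) (intro conjI lct haus coarse Kne cpt cvx nr)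
qed

end
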